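(* Let $\beta,\kappa\ge0$ and let $\gamma$ be a simple loop in $E_N$ with $\partial\hat\partial\gamma\subseteq E_N$. For each $e\in\gamma_1$ fix a plaquette $p_e\in\hat\partial e$. Then $$\mathbb E_{N,\beta,\kappa}\Bigl[\rho\Bigl(\sum_{e\in\gamma_1\setminus\gamma'}(d\sigma)_{p_e}\Bigr)\Bigr]=\mathbb E_{N,\beta,\kappa}\Bigl[\prod_{e\in\gamma_1\setminus\gamma'}\theta_{\beta,\kappa}\bigl(\sigma_e-(d\sigma)_{p_e}\bigr)\Bigr].$$
   Context: $G=\mathbb Z_n$, $\rho$ faithful unitary one-dimensional. On $\mathbb Z^4$: $E_N,P_N$ oriented edges/plaquettes with vertices in $B_N=[-N,N]^4\cap\mathbb Z^4$; $\partial p$ oriented boundary edges; $\hat\partial e=\{p:e\in\partial p\}$; $\partial\hat\partial\gamma=\bigcup_{e\in\gamma}\bigcup_{p\in\hat\partial e}\partial p$. $\Sigma_{E_N}$: $\sigma:E_N\to G$, $\sigma_{-e}=-\sigma_e$, $(d\sigma)_p=\sum_{e\in\partial p}\sigma_e$; $\mu_{N,\beta,\kappa}(\sigma)\propto\exp(\beta\sum_p\rho((d\sigma)_p)+\kappa\sum_e\rho(\sigma_e))$, expectation $\mathbb E_{N,\beta,\kappa}$. Simple loop: set $\gamma$ of oriented edges, $e\in\gamma\Rightarrow-e\notin\gamma$, orderable into an oriented loop. $\gamma_c$: edges of $\gamma$ sharing a plaquette with another edge of $\gamma\cup(-\gamma)$; $\gamma_1=\gamma\setminus\gamma_c$; $\gamma'=\gamma'(\sigma)$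 is the set of $e\in\gamma_1$ for which there are $p,p'\in\hat\partial e$ with $(d\sigma)_p\ne(d\sigma)_{p'}$. $\varphi_r(g)=e^{r(\mathrm{Re}\rho(g)-1)}$ and $\theta_{\beta,\kappa}(\hat g)=\frac{\sum_{g\in G}\rho(g)\varphi_\beta(g)^{12}\varphi_\kappa(g+\hat g)^2}{\sum_{g\in G}\varphi_\beta(g)^{12}\varphi_\kappa(g+\hat g)^2}$. *)

theory Defs
  imports "HOL-Analysis.Finite_Cartesian_Product"
begin

text \<open>Lattice Z^4. Points are int^4, directions are elements of the type 4.
  An oriented edge (v,i,True) goes from v to v + e_i; (v,i,False) is its reversal.
  An oriented plaquette (v,i,j) with i \<noteq> j is the unit square at v spanned by
  e_i, e_j, oriented from e_i towards e_j; (v,j,i) is its reversal.\<close>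

type_synonym pt = "int ^ 4"
type_synonym edge = "pt \<times> 4 \<times> bool"
type_synonym plaq = "pt \<times> 4 \<times> 4"

definition uvec :: "4 \<Rightarrow> pt" where
  "uvec i = (\<chi> k. if k = i then 1 else 0)"

definition box :: "nat \<Rightarrow> pt set" where
  "box N = {x. \<forall>k. \<bar>x $ k\<bar> \<le> int N}"

definition neg_edge :: "edge \<Rightarrow> edge" where
  "neg_edge e = (case e of (v, i, s) \<Rightarrow> (v, i, \<not> s))"

definition estart :: "edge \<Rightarrow> pt" where
  "estart e = (case e of (v, i, s) \<Rightarrow> if s then v else v + uvec i)"

definition eend :: "edge \<Rightarrow> pt" where
  "eend e = (case e of (v, i, s) \<Rightarrow> if s then v + uvec i else v)"

definition edges :: "nat \<Rightarrow> edge set" where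
  "edges N = {(v, i, s). v \<in> box N \<and> v + uvec i \<in> box N}"

definition plaqs_Z4 :: "plaq set" where
  "plaqs_Z4 = {(v, i, j). i \<noteq> j}"

definition plaqs :: "nat \<Rightarrow> plaq set" where
  "plaqs N = {(v, i, j). i \<noteq> j \<and> v \<in> box N \<and> v + uvec i \<in> box N
      \<and> v + uvec j \<in> box N \<and> v + uvec i + uvec j \<in> box N}"

definition bd :: "plaq \<Rightarrow> edge set" where
  "bd p = (case p of (v, i, j) \<Rightarrow>
     {(v, i, True), (v + uvec i, j, True), (v + uvec j, i, False), (v, j, False)})"

definition cobd :: "edge \<Rightarrow> plaq set" where
  "cobd e = {p \<in> plaqs_Z4. e \<in> bd p}"

definition bd_cobd :: "edge set \<Rightarrow> edge set" where
  "bd_cobd \<gamma> = (\<Union>e\<in>\<gamma>. \<Union>p\<in>cobd e. bd p)"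

definition simple_loop :: "edge set \<Rightarrow> bool" where
  "simple_loop \<gamma> \<longleftrightarrow> (\<forall>e\<in>\<gamma>. neg_edge e \<notin> \<gamma>) \<and>
     (\<exists>es. es \<noteq> [] \<and> distinct es \<and> set es = \<gamma> \<and>
        (\<forall>k < length es. eend (es ! k) = estart (es ! ((k + 1) mod length es))))"

definition gamma_c :: "edge set \<Rightarrow> edge set" where
  "gamma_c \<gamma> = {e \<in> \<gamma>. \<exists>p \<in> plaqs_Z4. \<exists>e'. e \<in> bd p \<and> e' \<in> bd p \<and>
      e' \<in> \<gamma> \<union> neg_edge ` \<gamma> \<and> e' \<noteq> e \<and> e' \<noteq> neg_edge e}"

definition gamma1 :: "edge set \<Rightarrow> edge set" where
  "gamma1 \<gamma> = \<gamma> - gamma_c \<gamma>"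

text \<open>Group G = Z_n, elements represented by integers; (d sigma)_p reduced mod n.\<close>
definition dsig :: "nat \<Rightarrow> (edge \<Rightarrow> int) \<Rightarrow> plaq \<Rightarrow> int" where
  "dsig n \<sigma> p = (\<Sum>e\<in>bd p. \<sigma> e) mod int n"

definition gamma' :: "nat \<Rightarrow> (edge \<Rightarrow> int) \<Rightarrow> edge set \<Rightarrow> edge set" where
  "gamma' n \<sigma> \<gamma> = {e \<in> gamma1 \<gamma>. \<exists>p \<in> cobd e. \<exists>p' \<in> cobd e. dsig n \<sigma> p \<noteq> dsig n \<sigma> p'}"

definition configs :: "nat \<Rightarrow> nat \<Rightarrow> (edge \<Rightarrow> int) set" where
  "configs n N = {\<sigma>. (\<forall>e\<in>edges N. \<sigma> e \<in> {0..<int n} \<and> \<sigma> (neg_edge e) = (- \<sigma> e) mod int n)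
                    \<and> (\<forall>e. e \<notin> edges N \<longrightarrow> \<sigma> e = 0)}"

definition faithful_rep :: "nat \<Rightarrow> (int \<Rightarrow> complex) \<Rightarrow> bool" where
  "faithful_rep n \<rho> \<longleftrightarrow> (\<forall>a b. \<rho> (a + b) = \<rho> a * \<rho> b) \<and> \<rho> (int n) = 1
      \<and> (\<forall>a. cmod (\<rho> a) = 1) \<and> (\<forall>a. \<rho> a = 1 \<longrightarrow> int n dvd a)"

definition weight :: "nat \<Rightarrow> (int \<Rightarrow> complex) \<Rightarrow> nat \<Rightarrow> real \<Rightarrow> real \<Rightarrow> (edge \<Rightarrow> int) \<Rightarrow> complex" where
  "weight n \<rho> N \<beta> \<kappa> \<sigma> = exp (of_real \<beta> * (\<Sum>p\<in>plaqs N. \<rho> (dsig n \<sigma> p))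
                              + of_real \<kappa> * (\<Sum>e\<in>edges N. \<rho> (\<sigma> e)))"

definition expect :: "nat \<Rightarrow> (int \<Rightarrow> complex) \<Rightarrow> nat \<Rightarrow> real \<Rightarrow> real \<Rightarrow> ((edge \<Rightarrow> int) \<Rightarrow> complex) \<Rightarrow> complex" where
  "expect n \<rho> N \<beta> \<kappa> f = (\<Sum>\<sigma>\<in>configs n N. f \<sigma> * weight n \<rho> N \<beta> \<kappa> \<sigma>)
                          / (\<Sum>\<sigma>\<in>configs n N. weight n \<rho> N \<beta> \<kappa> \<sigma>)"

definition phi :: "(int \<Rightarrow> complex) \<Rightarrow> real \<Rightarrow> int \<Rightarrow> real" where
  "phi \<rho> r g = exp (r * (Re (\<rho> g) - 1))"

definition theta :: "nat \<Rightarrow> (int \<Rightarrow> complex) \<Rightarrow> real \<Rightarrow> real \<Rightarrow> int \<Rightarrow> complex" where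
  "theta n \<rho> \<beta> \<kappa> h =
     (\<Sum>g\<in>{0..<int n}. \<rho> g * of_real (phi \<rho> \<beta> g ^ 12 * phi \<rho> \<kappa> (g + h) ^ 2))
     / of_real (\<Sum>g\<in>{0..<int n}. phi \<rho> \<beta> g ^ 12 * phi \<rho> \<kappa> (g + h) ^ 2)"

end

theory Submission
  imports Defs "HOL-Library.FuncSet"
begin


lemma rho0: assumes "faithful_rep n \<rho>" shows "\<rho> 0 = 1"
proof -
  have h: "\<rho> 0 = \<rho> 0 * \<rho> 0" using assms unfolding faithful_rep_def by (metis add_0)
  have "\<rho> 0 \<noteq> 0" using assms unfolding faithful_rep_def by (metis norm_zero zero_neq_one)
  with h show ?thesis by (metis mult_cancel_left1)
qed

lemma rho_add: "faithful_rep n \<rho> \<Longrightarrow> \<rho> (a + b) = \<rho> a * \<rho> b"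
  unfolding faithful_rep_def by blast

lemma rho_neg_mult: assumes "faithful_rep n \<rho>" shows "\<rho> (- a) * \<rho> a = 1"
  using rho_add[OF assms, of "-a" a] rho0[OF assms] by simp

lemma rho_nk_nat: assumes "faithful_rep n \<rho>" shows "\<rho> (int n * int m) = 1"
proof (induction m)
  case 0 then show ?case using rho0[OF assms] by simp
next
  case (Suc m)
  have "\<rho> (int n * int (Suc m)) = \<rho> (int n * int m + int n)" by (simp add: algebra_simps)
  also have "\<dots> = 1" using rho_add[OF assms] Suc assms unfolding faithful_rep_def by simp
  finally show ?case .
qed

lemma rho_nk: assumes "faithful_rep n \<rho>" shows "\<rho> (int n * k) = 1"
proof (cases "k \<ge> 0")
  case True then show ?thesis using rho_nk_nat[OF assms, of "nat k"] by simp
next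
  case False
  have "\<rho> (int n * (-k)) = 1" using rho_nk_nat[OF assms, of "nat (-k)"] False by simp
  moreover have "\<rho> (- (int n * (-k))) * \<rho> (int n * (-k)) = 1" by (rule rho_neg_mult[OF assms])
  ultimately show ?thesis by simp
qed

lemma rho_mod: assumes "faithful_rep n \<rho>" shows "\<rho> (a mod int n) = \<rho> a"
proof -
  have "a = a mod int n + int n * (a div int n)" by simp
  then have "\<rho> a = \<rho> (a mod int n) * \<rho> (int n * (a div int n))" using rho_add[OF assms] by metis
  then show ?thesis using rho_nk[OF assms] by simp
qed

lemma rho_cong: assumes "faithful_rep n \<rho>" "a mod int n = b mod int n" shows "\<rho> a = \<rho> b"
  by (metis assms rho_mod)

lemma rho_neg: assumes "faithful_rep n \<rho>" shows "\<rho> (- a) = cnj (\<rho> a)"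
proof -
  have m: "cmod (\<rho> a) = 1" using assms unfolding faithful_rep_def by blast
  have "\<rho> a * cnj (\<rho> a) = 1" using m by (metis complex_norm_square mult.commute of_real_1 power_one)
  then show ?thesis using rho_neg_mult[OF assms, of a] by (metis mult.commute mult_cancel_left1 mult.assoc mult_1)
qed

lemma rho_plus_neg: assumes "faithful_rep n \<rho>" shows "\<rho> a + \<rho> (- a) = of_real (2 * Re (\<rho> a))"
  using rho_neg[OF assms] by (simp add: complex_add_cnj)

lemma rho_sum: assumes "faithful_rep n \<rho>" shows "\<rho> (sum f A) = (\<Prod>x\<in>A. \<rho> (f x))"
proof (cases "finite A")
  case True then show ?thesis
    by (induction A rule: finite_induct) (auto simp: rho0[OF assms] rho_add[OF assms])
next
  case False then show ?thesis by (simp add: rho0[OF assms])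
qed




definition revp :: "plaq \<Rightarrow> plaq" where "revp p = (case p of (v,i,j) \<Rightarrow> (v,j,i))"

lemma revp_revp[simp]: "revp (revp p) = p" by (cases p) (auto simp: revp_def)
lemma inj_revp: "inj revp" by (metis injI revp_revp)
lemma neg_neg[simp]: "neg_edge (neg_edge e) = e" by (cases e) (auto simp: neg_edge_def)
lemma inj_neg: "inj neg_edge" by (metis injI neg_neg)
lemma neg_edge_simp[simp]: "neg_edge (v,i,s) = (v,i,\<not>s)" by (simp add: neg_edge_def)

lemma uvec_neq0: "uvec i \<noteq> 0"
proof
  assume "uvec i = 0" then have "uvec i $ i = 0" by simp
  then show False by (simp add: uvec_def)
qed

lemma uvec_inj: "uvec i = uvec j \<longleftrightarrow> i = j"
proof
  assume "uvec i = uvec j" then have "uvec i $ i = uvec j $ i" by simp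
  then show "i = j" by (simp add: uvec_def split: if_splits)
qed simp

lemma add_uvec_neq[simp]: "v + uvec i \<noteq> v" "v \<noteq> v + uvec i"
  using uvec_neq0 by (metis add_cancel_left_right)+

lemma add_uvec_eq[simp]: "v + uvec i = v + uvec j \<longleftrightarrow> i = j" by (simp add: uvec_inj)

lemma bd_revp: "bd (revp p) = neg_edge ` bd p"
  by (cases p) (auto simp: revp_def bd_def)

lemma revp_Z4: "revp p \<in> plaqs_Z4 \<longleftrightarrow> p \<in> plaqs_Z4"
  by (cases p) (auto simp: revp_def plaqs_Z4_def)

lemma bd_no_neg: assumes "p \<in> plaqs_Z4" "e \<in> bd p" shows "neg_edge e \<notin> bd p"
proof -
  obtain v i j where p: "p = (v,i,j)" by (cases p)
  with assms have ij: "i \<noteq> j" by (simp add: plaqs_Z4_def)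
  have a: "v + uvec i + uvec j \<noteq> v + uvec j" by (metis add.commute add_uvec_neq(1) add.assoc)
  show ?thesis using assms p ij a uvec_neq0[of j] by (auto simp: bd_def add.commute)
qed

lemma edges_neg: "x \<in> edges N \<Longrightarrow> neg_edge x \<in> edges N"
  by (cases x) (auto simp: edges_def)

lemma plaqs_Z4_sub: "plaqs N \<subseteq> plaqs_Z4" by (auto simp: plaqs_def plaqs_Z4_def)

lemma plaqs_bd: "p \<in> plaqs N \<Longrightarrow> bd p \<subseteq> edges N"
  by (cases p) (auto simp: plaqs_def bd_def edges_def add.commute add.left_commute)

lemma plaqs_of_bd: assumes "p \<in> plaqs_Z4" "bd p \<subseteq> edges N" shows "p \<in> plaqs N"
proof -
  obtain v i j where p: "p = (v,i,j)" by (cases p)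
  show ?thesis using assms unfolding p bd_def edges_def plaqs_def plaqs_Z4_def by auto
qed

lemma revp_plaqs: "revp p \<in> plaqs N \<longleftrightarrow> p \<in> plaqs N"
  by (cases p) (auto simp: revp_def plaqs_def add.commute add.left_commute)

lemma finite_box: "finite (box N)"
proof -
  have "box N \<subseteq> (\<lambda>f. \<chi> k. f k) ` (UNIV \<rightarrow>\<^sub>E {- int N .. int N})"
  proof
    fix x assume "x \<in> box N"
    then have "(\<lambda>k. x $ k) \<in> UNIV \<rightarrow>\<^sub>E {- int N .. int N}" by (auto simp: box_def abs_le_iff) (smt (verit))
    then show "x \<in> (\<lambda>f. \<chi> k. f k) ` (UNIV \<rightarrow>\<^sub>E {- int N .. int N})" by force
  qed
  then show ?thesis by (rule finite_subset) (intro finite_imageI finite_PiE, auto)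
qed

lemma finite_edges: "finite (edges N)"
proof -
  have "edges N \<subseteq> box N \<times> UNIV \<times> UNIV" by (auto simp: edges_def)
  then show ?thesis by (rule finite_subset) (simp add: finite_box)
qed

lemma finite_plaqs: "finite (plaqs N)"
proof -
  have "plaqs N \<subseteq> box N \<times> UNIV \<times> UNIV" by (auto simp: plaqs_def)
  then show ?thesis by (rule finite_subset) (simp add: finite_box)
qed

lemma cobd_neg: "cobd (neg_edge e) = revp ` cobd e"
proof -
  have h: "neg_edge e \<in> bd p \<longleftrightarrow> e \<in> bd (revp p)" for p
    using bd_revp[of p] by (metis image_iff neg_neg)
  show ?thesis
  proof (rule set_eqI, rule iffI)
    fix p assume "p \<in> cobd (neg_edge e)"
    then have "revp p \<in> cobd e" using h by (simp add: cobd_def revp_Z4)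
    then show "p \<in> revp ` cobd e" by (metis image_eqI revp_revp)
  next
    fix p assume "p \<in> revp ` cobd e"
    then obtain q where "q \<in> cobd e" "p = revp q" by blast
    then show "p \<in> cobd (neg_edge e)" using h by (simp add: cobd_def revp_Z4)
  qed
qed

lemma cobd_True: "cobd (v,i,True) = (\<lambda>j. (v,i,j)) ` (UNIV - {i}) \<union> (\<lambda>j. (v - uvec j, j, i)) ` (UNIV - {i})"
  unfolding cobd_def plaqs_Z4_def bd_def by (auto simp: image_iff)

lemma card_cobd_True: "card (cobd (v,i,True)) = 6"
proof -
  have c3: "card (UNIV - {i::4}) = 3" by (simp add: card_Diff_singleton)
  have i1: "inj_on (\<lambda>j. (v,i,j)) (UNIV - {i})" by (auto intro: inj_onI)
  have i2: "inj_on (\<lambda>j. (v - uvec j, j, i)) (UNIV - {i})" by (auto intro: inj_onI)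
  have d: "(\<lambda>j. (v,i,j)) ` (UNIV - {i}) \<inter> (\<lambda>j. (v - uvec j, j, i)) ` (UNIV - {i}) = {}" by auto
  show ?thesis unfolding cobd_True
    by (subst card_Un_disjoint) (auto simp: card_image i1 i2 c3 d)
qed

lemma card_cobd: "card (cobd e) = 6"
proof -
  obtain v i s where e: "e = (v,i,s)" by (cases e)
  show ?thesis
  proof (cases s)
    case True then show ?thesis using e card_cobd_True by simp
  next
    case False
    then have "e = neg_edge (v,i,True)" using e by simp
    then show ?thesis using cobd_neg card_cobd_True
      by (metis card_image inj_on_subset inj_revp subset_UNIV)
  qed
qed

lemma finite_cobd: "finite (cobd e)" using card_cobd[of e] by (metis card.infinite zero_neq_numeral)




locale setting =
  fixes n N :: nat and \<rho> :: "int \<Rightarrow> complex" and \<gamma> :: "edge set" and pe :: "edge \<Rightarrow> plaq"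
  assumes npos: "0 < n" and rep: "faithful_rep n \<rho>" and loop: "simple_loop \<gamma>"
    and sub: "\<gamma> \<subseteq> edges N" and bdc: "bd_cobd \<gamma> \<subseteq> edges N"
    and pe: "\<forall>e\<in>gamma1 \<gamma>. pe e \<in> cobd e"
begin

abbreviation "S \<equiv> gamma1 \<gamma>"

lemma fin_gamma: "finite \<gamma>" using loop unfolding simple_loop_def by (metis List.finite_set)
lemma S_sub: "S \<subseteq> \<gamma>" by (auto simp: gamma1_def)
lemma fin_S: "finite S" using fin_gamma S_sub finite_subset by blast
lemma neg_notin: "e \<in> \<gamma> \<Longrightarrow> neg_edge e \<notin> \<gamma>" using loop unfolding simple_loop_def by blast

lemma keyK:
  assumes e: "e \<in> S" and p: "p \<in> cobd e" and x: "x \<in> bd p" and xg: "x \<in> \<gamma> \<or> neg_edge x \<in> \<gamma>"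
  shows "x = e"
proof (rule ccontr)
  assume ne: "x \<noteq> e"
  have pz: "p \<in> plaqs_Z4" and ep: "e \<in> bd p" using p by (auto simp: cobd_def)
  have xne: "x \<noteq> neg_edge e" using bd_no_neg[OF pz ep] x by blast
  have "x \<in> \<gamma> \<union> neg_edge ` \<gamma>" using xg by (metis UnI1 UnI2 image_eqI neg_neg)
  then have "e \<in> gamma_c \<gamma>" unfolding gamma_c_def using e S_sub pz ep x ne xne by blast
  then show False using e by (simp add: gamma1_def)
qed

lemma cobd_plaqs: assumes "e \<in> \<gamma>" "p \<in> cobd e" shows "p \<in> plaqs N"
proof -
  have "bd p \<subseteq> bd_cobd \<gamma>" using assms unfolding bd_cobd_def by blast
  then show ?thesis using bdc plaqs_of_bd assms(2) by (auto simp: cobd_def)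
qed

definition shift :: "(edge \<Rightarrow> int) \<Rightarrow> (edge \<Rightarrow> int) \<Rightarrow> edge \<Rightarrow> int" where
  "shift \<sigma> t x = (if x \<in> S then (\<sigma> x + t x) mod int n
      else if neg_edge x \<in> S then (- (\<sigma> (neg_edge x) + t (neg_edge x))) mod int n else \<sigma> x)"

lemma S_edges: "x \<in> S \<Longrightarrow> x \<in> edges N" using S_sub sub by blast
lemma S_neg: "x \<in> S \<Longrightarrow> neg_edge x \<notin> S" using S_sub neg_notin by blast

lemma conf_neg: "\<sigma> \<in> configs n N \<Longrightarrow> x \<in> edges N \<Longrightarrow> \<sigma> (neg_edge x) = (- \<sigma> x) mod int n"
  by (simp add: configs_def)
lemma conf_range: "\<sigma> \<in> configs n N \<Longrightarrow> x \<in> edges N \<Longrightarrow> \<sigma> x \<in> {0..<int n}"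
  by (simp add: configs_def)
lemma conf_out: "\<sigma> \<in> configs n N \<Longrightarrow> x \<notin> edges N \<Longrightarrow> \<sigma> x = 0"
  unfolding configs_def by blast

lemma shift_conf: assumes "\<sigma> \<in> configs n N" shows "shift \<sigma> t \<in> configs n N"
proof -
  have np: "int n > 0" using npos by simp
  { fix x assume x: "x \<in> edges N"
    have "shift \<sigma> t x \<in> {0..<int n}" using conf_range[OF assms x] np by (auto simp: shift_def)
    moreover have "shift \<sigma> t (neg_edge x) = (- shift \<sigma> t x) mod int n"
    proof (cases "x \<in> S")
      case True then show ?thesis using S_neg by (simp add: shift_def mod_minus_eq)
    next
      case False note F = this
      show ?thesis
      proof (cases "neg_edge x \<in> S")
        case True then show ?thesis using F
          by (simp add: shift_def mod_minus_eq add.commute)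
      next
        case False then show ?thesis using F conf_neg[OF assms x] by (simp add: shift_def)
      qed
    qed
    ultimately have "shift \<sigma> t x \<in> {0..<int n} \<and> shift \<sigma> t (neg_edge x) = (- shift \<sigma> t x) mod int n" by blast }
  moreover
  { fix x assume x: "x \<notin> edges N"
    then have "x \<notin> S" "neg_edge x \<notin> S" using S_edges edges_neg by (metis neg_neg)+
    then have "shift \<sigma> t x = 0" using conf_out[OF assms x] by (simp add: shift_def) }
  ultimately show ?thesis unfolding configs_def by blast
qed

lemma shift_inv: assumes "\<sigma> \<in> configs n N" shows "shift (shift \<sigma> t) (\<lambda>e. - t e) = \<sigma>"
proof
  fix x
  show "shift (shift \<sigma> t) (\<lambda>e. - t e) x = \<sigma> x"
  proof (cases "x \<in> S")
    case True
    have "\<sigma> x \<in> {0..<int n}" using conf_range[OF assms S_edges[OF True]] .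
    then show ?thesis using True by (simp add: shift_def mod_diff_left_eq)
  next
    case F: False
    show ?thesis
    proof (cases "neg_edge x \<in> S")
      case True
      have "\<sigma> x = (- \<sigma> (neg_edge x)) mod int n"
        using conf_neg[OF assms S_edges[OF True]] by simp
      moreover have "(t (neg_edge x) - (\<sigma> (neg_edge x) + t (neg_edge x)) mod int n) mod int n
          = (- \<sigma> (neg_edge x)) mod int n"
        using mod_diff_right_eq[of "t (neg_edge x)" "\<sigma> (neg_edge x) + t (neg_edge x)" "int n"] by simp
      ultimately show ?thesis using True F S_neg[OF True]
        by (simp add: shift_def)
    next
      case False then show ?thesis using F by (simp add: shift_def)
    qed
  qed
qed

lemma shift_bij: "bij_betw (\<lambda>\<sigma>. shift \<sigma> t) (configs n N) (configs n N)"
proof (rule bij_betwI[where g = "\<lambda>\<sigma>. shift \<sigma> (\<lambda>e. - t e)"])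
  show "(\<lambda>\<sigma>. shift \<sigma> t) \<in> configs n N \<rightarrow> configs n N" using shift_conf by blast
  show "(\<lambda>\<sigma>. shift \<sigma> (\<lambda>e. - t e)) \<in> configs n N \<rightarrow> configs n N" using shift_conf by blast
  show "\<And>x. x \<in> configs n N \<Longrightarrow> shift (shift x t) (\<lambda>e. - t e) = x" by (rule shift_inv)
  fix y assume "y \<in> configs n N"
  from shift_inv[OF this, of "\<lambda>e. - t e"] show "shift (shift y (\<lambda>e. - t e)) t = y" by simp
qed

lemma sum_shift: "(\<Sum>\<sigma>\<in>configs n N. f \<sigma>) = (\<Sum>\<sigma>\<in>configs n N. f (shift \<sigma> t))"
  using sum.reindex_bij_betw[OF shift_bij[of t], of f] by simp

end



context setting begin

lemma finite_bd: "finite (bd p)" by (cases p) (simp add: bd_def)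

lemma bd_other: assumes e: "e \<in> S" and p: "p \<in> cobd e" and x: "x \<in> bd p" "x \<noteq> e"
  shows "x \<notin> S" "neg_edge x \<notin> S"
  using keyK[OF e p x(1)] x S_sub by blast+

lemma shift_other: "x \<notin> S \<Longrightarrow> neg_edge x \<notin> S \<Longrightarrow> shift \<sigma> t x = \<sigma> x"
  by (simp add: shift_def)

lemma dsig_shift_cobd: assumes e: "e \<in> S" and p: "p \<in> cobd e"
  shows "dsig n (shift \<sigma> t) p = (dsig n \<sigma> p + t e) mod int n"
proof -
  have ep: "e \<in> bd p" using p by (simp add: cobd_def)
  have "(\<Sum>x\<in>bd p. shift \<sigma> t x) = shift \<sigma> t e + (\<Sum>x\<in>bd p - {e}. shift \<sigma> t x)"
    using sum.remove[OF finite_bd ep] .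
  also have "(\<Sum>x\<in>bd p - {e}. shift \<sigma> t x) = (\<Sum>x\<in>bd p - {e}. \<sigma> x)"
    using bd_other[OF e p] shift_other by (intro sum.cong) auto
  also have "shift \<sigma> t e = (\<sigma> e + t e) mod int n" using e by (simp add: shift_def)
  finally have h: "(\<Sum>x\<in>bd p. shift \<sigma> t x) = (\<sigma> e + t e) mod int n + (\<Sum>x\<in>bd p - {e}. \<sigma> x)" .
  have h2: "(\<Sum>x\<in>bd p. \<sigma> x) = \<sigma> e + (\<Sum>x\<in>bd p - {e}. \<sigma> x)"
    using sum.remove[OF finite_bd ep] .
  have "(\<Sum>x\<in>bd p - {e}. \<sigma> x) + (\<sigma> e + t e) mod int n = (\<Sum>x\<in>bd p - {e}. \<sigma> x) + (\<sigma> e + t e) mod int n" ..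
  show ?thesis unfolding dsig_def h h2
    using mod_add_right_eq[of "(\<Sum>x\<in>bd p - {e}. \<sigma> x)" "\<sigma> e + t e" "int n"]
      mod_add_left_eq[of "\<sigma> e + (\<Sum>x\<in>bd p - {e}. \<sigma> x)" "int n" "t e"]
    by (simp add: ac_simps)
qed

lemma dsig_shift_Q: assumes "\<forall>x\<in>bd p. x \<notin> S \<and> neg_edge x \<notin> S"
  shows "dsig n (shift \<sigma> t) p = dsig n \<sigma> p"
  unfolding dsig_def using assms shift_other by (metis (no_types, lifting) sum.cong)

lemma rho_dsig_rev: assumes s: "\<sigma> \<in> configs n N" and p: "p \<in> plaqs N"
  shows "\<rho> (dsig n \<sigma> (revp p)) = \<rho> (- dsig n \<sigma> p)"
proof -
  have "\<rho> (dsig n \<sigma> (revp p)) = \<rho> (\<Sum>x\<in>neg_edge ` bd p. \<sigma> x)"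
    unfolding dsig_def bd_revp by (rule rho_mod[OF rep])
  also have "\<dots> = \<rho> (\<Sum>x\<in>bd p. \<sigma> (neg_edge x))"
    by (subst sum.reindex) (auto intro: inj_on_subset[OF inj_neg])
  also have "\<dots> = (\<Prod>x\<in>bd p. \<rho> (\<sigma> (neg_edge x)))" by (rule rho_sum[OF rep])
  also have "\<dots> = (\<Prod>x\<in>bd p. \<rho> (- \<sigma> x))"
    using plaqs_bd[OF p] conf_neg[OF s] rho_mod[OF rep] by (intro prod.cong) auto
  also have "\<dots> = \<rho> (\<Sum>x\<in>bd p. - \<sigma> x)" by (rule rho_sum[OF rep, symmetric])
  also have "\<dots> = \<rho> (- dsig n \<sigma> p)"
    unfolding dsig_def by (rule rho_cong[OF rep]) (simp add: sum_negf mod_minus_eq)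
  finally show ?thesis .
qed

lemma gamma'_shift: "gamma' n (shift \<sigma> t) \<gamma> = gamma' n \<sigma> \<gamma>"
proof -
  { fix e p p' assume e: "e \<in> S" and p: "p \<in> cobd e" and p': "p' \<in> cobd e"
    have "dsig n (shift \<sigma> t) p = dsig n (shift \<sigma> t) p' \<longleftrightarrow> dsig n \<sigma> p = dsig n \<sigma> p'"
      unfolding dsig_shift_cobd[OF e p] dsig_shift_cobd[OF e p']
      using mod_eq_dvd_iff[of "dsig n \<sigma> p + t e" "int n" "dsig n \<sigma> p' + t e"]
            mod_eq_dvd_iff[of "dsig n \<sigma> p" "int n" "dsig n \<sigma> p'"]
      by (simp add: dsig_def) }
  then show ?thesis unfolding gamma'_def by blast
qed

end



context setting begin

lemma keyK2:
  assumes e: "e \<in> S" and pz: "p \<in> plaqs_Z4" and ep: "e \<in> bd p \<or> neg_edge e \<in> bd p"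
    and x: "x \<in> bd p" and xg: "x \<in> \<gamma> \<or> neg_edge x \<in> \<gamma>"
  shows "x = e \<or> x = neg_edge e"
proof (cases "e \<in> bd p")
  case True
  then have "p \<in> cobd e" using pz by (simp add: cobd_def)
  then show ?thesis using keyK[OF e _ x xg] by blast
next
  case False
  then have nb: "neg_edge e \<in> bd p" using ep by blast
  have "p \<in> cobd (neg_edge e)" using pz nb by (simp add: cobd_def)
  then have "revp p \<in> cobd e" using cobd_neg[of e] by (metis image_iff revp_revp)
  moreover have "neg_edge x \<in> bd (revp p)" using x bd_revp by blast
  moreover have "neg_edge x \<in> \<gamma> \<or> neg_edge (neg_edge x) \<in> \<gamma>" using xg by auto
  ultimately have "neg_edge x = e" using keyK[OF e] by blast
  then show ?thesis by auto
qed

definition "UP = (\<Union>e\<in>S. cobd e \<union> cobd (neg_edge e))"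
definition "Q = plaqs N - UP"
definition "UE = (\<Union>e\<in>S. {e, neg_edge e})"
definition "R = edges N - UE"

lemma cobd_Z4: "p \<in> cobd e \<Longrightarrow> p \<in> plaqs_Z4" by (simp add: cobd_def)

lemma UP_sub: "UP \<subseteq> plaqs N"
proof -
  { fix e p assume e: "e \<in> S" and p: "p \<in> cobd (neg_edge e)"
    then obtain q where "q \<in> cobd e" "p = revp q" using cobd_neg by blast
    then have "p \<in> plaqs N" using cobd_plaqs e S_sub revp_plaqs by blast }
  then show ?thesis unfolding UP_def using cobd_plaqs S_sub by blast
qed

lemma UE_sub: "UE \<subseteq> edges N" unfolding UE_def using S_edges edges_neg by blast

lemma Q_prop: assumes "p \<in> Q" "x \<in> bd p" shows "x \<notin> S \<and> neg_edge x \<notin> S"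
proof -
  have pz: "p \<in> plaqs_Z4" "p \<notin> UP" using assms plaqs_Z4_sub by (auto simp: Q_def)
  show ?thesis
  proof
    show "x \<notin> S" using pz assms(2) unfolding UP_def cobd_def by blast
    show "neg_edge x \<notin> S"
    proof
      assume nx: "neg_edge x \<in> S"
      have "p \<in> cobd (neg_edge (neg_edge x))" using pz assms(2) unfolding cobd_def by simp
      then have "p \<in> UP" using nx unfolding UP_def by blast
      then show False using pz by blast
    qed
  qed
qed

lemma R_prop: assumes "x \<in> R" shows "x \<notin> S \<and> neg_edge x \<notin> S"
proof -
  have xu: "x \<notin> UE" using assms by (simp add: R_def)
  have "x \<notin> S" using xu unfolding UE_def by blast
  moreover have "neg_edge x \<notin> S"
  proof
    assume nx: "neg_edge x \<in> S"
    have "x \<in> {neg_edge x, neg_edge (neg_edge x)}" by simp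
    then have "x \<in> UE" using nx unfolding UE_def by blast
    then show False using xu by blast
  qed
  ultimately show ?thesis by blast
qed

lemma S_gamma: "e \<in> S \<Longrightarrow> e \<in> \<gamma>" using S_sub by (rule subsetD)

lemma UP_disj: assumes e1: "e1 \<in> S" and e2: "e2 \<in> S" and ne: "e1 \<noteq> e2"
  shows "(cobd e1 \<union> cobd (neg_edge e1)) \<inter> (cobd e2 \<union> cobd (neg_edge e2)) = {}"
proof (rule ccontr)
  assume "\<not> ?thesis"
  then obtain p where p1: "p \<in> cobd e1 \<union> cobd (neg_edge e1)" and p2: "p \<in> cobd e2 \<union> cobd (neg_edge e2)" by blast
  have pz: "p \<in> plaqs_Z4" using p1 cobd_Z4 by blast
  have b1: "e1 \<in> bd p \<or> neg_edge e1 \<in> bd p" using p1 unfolding cobd_def by blast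
  have b2: "e2 \<in> bd p \<or> neg_edge e2 \<in> bd p" using p2 unfolding cobd_def by blast
  have g1: "e1 \<in> \<gamma>" using e1 by (rule S_gamma)
  have g2: "e2 \<in> \<gamma>" using e2 by (rule S_gamma)
  have n1: "neg_edge e1 \<notin> \<gamma>" using g1 by (rule neg_notin)
  have n2: "neg_edge e2 \<notin> \<gamma>" using g2 by (rule neg_notin)
  show False
  proof (cases "e2 \<in> bd p")
    case True
    have "e2 = e1 \<or> e2 = neg_edge e1" using keyK2[OF e1 pz b1 True] g2 by blast
    then show False using ne n1 g2 by metis
  next
    case False
    then have x: "neg_edge e2 \<in> bd p" using b2 by blast
    have "neg_edge (neg_edge e2) \<in> \<gamma>" using g2 by simp
    then have "neg_edge e2 = e1 \<or> neg_edge e2 = neg_edge e1" using keyK2[OF e1 pz b1 x] by blast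
    then show False
    proof
      assume "neg_edge e2 = e1" then have "neg_edge e1 = e2" by (metis neg_neg)
      then show False using n1 g2 by simp
    next
      assume "neg_edge e2 = neg_edge e1" then have "e2 = e1" by (metis neg_neg)
      then show False using ne by simp
    qed
  qed
qed

lemma UE_disj: assumes e1: "e1 \<in> S" and e2: "e2 \<in> S" and ne: "e1 \<noteq> e2"
  shows "{e1, neg_edge e1} \<inter> {e2, neg_edge e2} = {}"
proof -
  have g1: "e1 \<in> \<gamma>" using e1 by (rule S_gamma)
  have g2: "e2 \<in> \<gamma>" using e2 by (rule S_gamma)
  have n1: "neg_edge e1 \<notin> \<gamma>" using g1 by (rule neg_notin)
  have n2: "neg_edge e2 \<notin> \<gamma>" using g2 by (rule neg_notin)
  have a: "e1 \<noteq> neg_edge e2" using g1 n2 by metis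
  have b: "neg_edge e1 \<noteq> e2" using g2 n1 by metis
  have c: "neg_edge e1 \<noteq> neg_edge e2" using ne by (metis neg_neg)
  show ?thesis using ne a b c by simp
qed

lemma self_disj: assumes "e \<in> S" shows "cobd e \<inter> cobd (neg_edge e) = {}"
proof (rule equals0I)
  fix p assume "p \<in> cobd e \<inter> cobd (neg_edge e)"
  then have "p \<in> plaqs_Z4" "e \<in> bd p" "neg_edge e \<in> bd p" unfolding cobd_def by auto
  then show False using bd_no_neg by blast
qed

lemma neg_ne: "e \<in> S \<Longrightarrow> neg_edge e \<noteq> e" using S_gamma neg_notin by metis

lemma fin_cobd_neg: "finite (cobd e \<union> cobd (neg_edge e))" using finite_cobd by simp

lemma plaq_sum: assumes s: "\<sigma> \<in> configs n N"
  shows "(\<Sum>p\<in>plaqs N. \<rho> (dsig n (shift \<sigma> t) p)) = (\<Sum>p\<in>Q. \<rho> (dsig n \<sigma> p))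
     + (\<Sum>e\<in>S. \<Sum>p\<in>cobd e. \<rho> (dsig n \<sigma> p + t e) + \<rho> (- (dsig n \<sigma> p + t e)))"
proof -
  let ?f = "\<lambda>p. \<rho> (dsig n (shift \<sigma> t) p)"
  have s': "shift \<sigma> t \<in> configs n N" by (rule shift_conf[OF s])
  have "sum ?f (plaqs N) = sum ?f Q + sum ?f UP"
    unfolding Q_def by (rule sum.subset_diff[OF UP_sub finite_plaqs])
  moreover have "sum ?f Q = (\<Sum>p\<in>Q. \<rho> (dsig n \<sigma> p))"
    using Q_prop dsig_shift_Q by (intro sum.cong) auto
  moreover have "sum ?f UP = (\<Sum>e\<in>S. sum ?f (cobd e \<union> cobd (neg_edge e)))"
    unfolding UP_def using fin_S fin_cobd_neg UP_disj by (intro sum.UNION_disjoint) auto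
  moreover
  { fix e assume e: "e \<in> S"
    have "sum ?f (cobd e \<union> cobd (neg_edge e)) = sum ?f (cobd e) + sum ?f (revp ` cobd e)"
      using sum.union_disjoint[OF finite_cobd finite_cobd self_disj[OF e]] cobd_neg by simp
    also have "sum ?f (revp ` cobd e) = sum (?f \<circ> revp) (cobd e)"
      by (rule sum.reindex) (rule inj_on_subset[OF inj_revp], simp)
    finally have "sum ?f (cobd e \<union> cobd (neg_edge e)) = (\<Sum>p\<in>cobd e. ?f p + ?f (revp p))"
      by (simp add: sum.distrib)
    also have "\<dots> = (\<Sum>p\<in>cobd e. \<rho> (dsig n \<sigma> p + t e) + \<rho> (- (dsig n \<sigma> p + t e)))"
    proof (rule sum.cong[OF refl])
      fix p assume p: "p \<in> cobd e"
      have pN: "p \<in> plaqs N" using cobd_plaqs e S_sub p by blast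
      have "?f p = \<rho> (dsig n \<sigma> p + t e)"
        unfolding dsig_shift_cobd[OF e p] by (rule rho_mod[OF rep])
      moreover have "?f (revp p) = \<rho> (- (dsig n \<sigma> p + t e))"
        unfolding rho_dsig_rev[OF s' pN] dsig_shift_cobd[OF e p]
        by (rule rho_cong[OF rep]) (simp add: mod_minus_eq)
      ultimately show "?f p + ?f (revp p) = \<rho> (dsig n \<sigma> p + t e) + \<rho> (- (dsig n \<sigma> p + t e))" by simp
    qed
    finally have "sum ?f (cobd e \<union> cobd (neg_edge e)) = \<dots>" . }
  ultimately show ?thesis by simp
qed

lemma edge_sum: assumes s: "\<sigma> \<in> configs n N"
  shows "(\<Sum>x\<in>edges N. \<rho> (shift \<sigma> t x)) = (\<Sum>x\<in>R. \<rho> (\<sigma> x))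
     + (\<Sum>e\<in>S. \<rho> (\<sigma> e + t e) + \<rho> (- (\<sigma> e + t e)))"
proof -
  let ?f = "\<lambda>x. \<rho> (shift \<sigma> t x)"
  have "sum ?f (edges N) = sum ?f R + sum ?f UE"
    unfolding R_def by (rule sum.subset_diff[OF UE_sub finite_edges])
  moreover have "sum ?f R = (\<Sum>x\<in>R. \<rho> (\<sigma> x))"
    using R_prop shift_other by (intro sum.cong) auto
  moreover have "sum ?f UE = (\<Sum>e\<in>S. sum ?f {e, neg_edge e})"
    unfolding UE_def using fin_S UE_disj by (intro sum.UNION_disjoint) auto
  moreover
  { fix e assume e: "e \<in> S"
    have "sum ?f {e, neg_edge e} = ?f e + ?f (neg_edge e)" using neg_ne[OF e] by simp
    also have "?f e = \<rho> (\<sigma> e + t e)" using e rho_mod[OF rep] by (simp add: shift_def)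
    also have "?f (neg_edge e) = \<rho> (- (\<sigma> e + t e))" using e S_neg[OF e] rho_mod[OF rep] by (simp add: shift_def)
    finally have "sum ?f {e, neg_edge e} = \<rho> (\<sigma> e + t e) + \<rho> (- (\<sigma> e + t e))" . }
  ultimately show ?thesis by simp
qed

definition "Cw \<beta> \<kappa> \<sigma> = exp (of_real \<beta> * (\<Sum>p\<in>Q. \<rho> (dsig n \<sigma> p)) + of_real \<kappa> * (\<Sum>x\<in>R. \<rho> (\<sigma> x)))"
definition "Fe \<beta> \<kappa> \<sigma> e g = exp (of_real \<beta> * (\<Sum>p\<in>cobd e. \<rho> (dsig n \<sigma> p + g) + \<rho> (- (dsig n \<sigma> p + g)))
     + of_real \<kappa> * (\<rho> (\<sigma> e + g) + \<rho> (- (\<sigma> e + g))))"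

lemma weight_shift: assumes s: "\<sigma> \<in> configs n N"
  shows "weight n \<rho> N \<beta> \<kappa> (shift \<sigma> t) = Cw \<beta> \<kappa> \<sigma> * (\<Prod>e\<in>S. Fe \<beta> \<kappa> \<sigma> e (t e))"
proof -
  define A where "A = (\<Sum>p\<in>Q. \<rho> (dsig n \<sigma> p))"
  define B where "B = (\<Sum>x\<in>R. \<rho> (\<sigma> x))"
  define Y where "Y = (\<lambda>e. \<Sum>p\<in>cobd e. \<rho> (dsig n \<sigma> p + t e) + \<rho> (- (dsig n \<sigma> p + t e)))"
  define Z where "Z = (\<lambda>e. \<rho> (\<sigma> e + t e) + \<rho> (- (\<sigma> e + t e)))"
  have "weight n \<rho> N \<beta> \<kappa> (shift \<sigma> t) = exp (of_real \<beta> * (A + sum Y S) + of_real \<kappa> * (B + sum Z S))"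
    unfolding weight_def plaq_sum[OF s] edge_sum[OF s] A_def B_def Y_def Z_def ..
  also have "of_real \<beta> * (A + sum Y S) + of_real \<kappa> * (B + sum Z S)
      = (of_real \<beta> * A + of_real \<kappa> * B) + (\<Sum>e\<in>S. of_real \<beta> * Y e + of_real \<kappa> * Z e)"
  proof -
    have "(\<Sum>e\<in>S. of_real \<beta> * Y e + of_real \<kappa> * Z e) = of_real \<beta> * sum Y S + of_real \<kappa> * sum Z S"
      by (simp add: sum.distrib sum_distrib_left)
    then show ?thesis by (simp add: distrib_left)
  qed
  also have "exp \<dots> = Cw \<beta> \<kappa> \<sigma> * (\<Prod>e\<in>S. Fe \<beta> \<kappa> \<sigma> e (t e))"
    unfolding exp_add exp_sum[OF fin_S] Cw_def Fe_def A_def B_def Y_def Z_def ..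
  finally show ?thesis .
qed

end



context setting begin

lemma sum_shift_mod:
  assumes per: "\<And>x y. x mod int n = y mod int n \<Longrightarrow> H x = H y"
  shows "(\<Sum>g\<in>{0..<int n}. H (b + g)) = (\<Sum>g\<in>{0..<int n}. H g)"
proof (rule sum.reindex_bij_witness[where j = "\<lambda>a. (b + a) mod int n" and i = "\<lambda>c. (c - b) mod int n"])
  have np: "int n > 0" using npos by simp
  fix a assume a: "a \<in> {0..<int n}"
  show "((b + a) mod int n - b) mod int n = a" using a by (simp add: mod_diff_left_eq)
  show "(b + a) mod int n \<in> {0..<int n}" using np by simp
  show "H ((b + a) mod int n) = H (b + a)" by (rule per) simp
next
  have np: "int n > 0" using npos by simp
  fix c assume c: "c \<in> {0..<int n}"
  show "(b + (c - b) mod int n) mod int n = c" using c by (simp add: mod_add_right_eq)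
  show "(c - b) mod int n \<in> {0..<int n}" using np by simp
qed

lemma phi_per: "x mod int n = y mod int n \<Longrightarrow> phi \<rho> r x = phi \<rho> r y"
  unfolding phi_def using rho_cong[OF rep] by metis

lemma theta_per: assumes "x mod int n = y mod int n" shows "theta n \<rho> \<beta> \<kappa> x = theta n \<rho> \<beta> \<kappa> y"
proof -
  have "\<And>g. (g + x) mod int n = (g + y) mod int n" using assms by (metis mod_add_right_eq)
  then have "\<And>g. phi \<rho> \<kappa> (g + x) = phi \<rho> \<kappa> (g + y)" by (rule phi_per)
  then show ?thesis unfolding theta_def by simp
qed

definition "Eh \<beta> \<kappa> h x = exp (\<beta> * (12 * Re (\<rho> x)) + \<kappa> * (2 * Re (\<rho> (x + h))))"

lemma Eh_per: "x mod int n = y mod int n \<Longrightarrow> Eh \<beta> \<kappa> h x = Eh \<beta> \<kappa> h y"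
proof -
  assume a: "x mod int n = y mod int n"
  then have "(x + h) mod int n = (y + h) mod int n" by (metis mod_add_left_eq)
  then show ?thesis unfolding Eh_def using a rho_cong[OF rep] by metis
qed

lemma theta_Eh: "theta n \<rho> \<beta> \<kappa> h * of_real (\<Sum>g\<in>{0..<int n}. Eh \<beta> \<kappa> h g)
   = (\<Sum>g\<in>{0..<int n}. \<rho> g * of_real (Eh \<beta> \<kappa> h g))"
proof -
  define c where "c = exp (- 12 * \<beta> - 2 * \<kappa>)"
  have c0: "c > 0" by (simp add: c_def)
  have ph: "phi \<rho> \<beta> g ^ 12 * phi \<rho> \<kappa> (g + h) ^ 2 = c * Eh \<beta> \<kappa> h g" for g
  proof -
    have "phi \<rho> \<beta> g ^ 12 = exp (of_nat 12 * (\<beta> * (Re (\<rho> g) - 1)))"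
      unfolding phi_def by (rule exp_of_nat_mult[symmetric])
    moreover have "phi \<rho> \<kappa> (g + h) ^ 2 = exp (of_nat 2 * (\<kappa> * (Re (\<rho> (g + h)) - 1)))"
      unfolding phi_def by (rule exp_of_nat_mult[symmetric])
    ultimately show ?thesis unfolding c_def Eh_def
      by (simp add: exp_add[symmetric] algebra_simps)
  qed
  have pos: "(\<Sum>g\<in>{0..<int n}. Eh \<beta> \<kappa> h g) > 0"
    using npos by (intro sum_pos) (auto simp: Eh_def)
  have th: "theta n \<rho> \<beta> \<kappa> h = (of_real c * (\<Sum>g\<in>{0..<int n}. \<rho> g * of_real (Eh \<beta> \<kappa> h g)))
      / (of_real c * of_real (\<Sum>g\<in>{0..<int n}. Eh \<beta> \<kappa> h g))"
    unfolding theta_def ph by (simp add: sum_distrib_left algebra_simps)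
  have nz: "complex_of_real (\<Sum>g\<in>{0..<int n}. Eh \<beta> \<kappa> h g) \<noteq> 0" using pos by (simp only: of_real_eq_0_iff)
  have cz: "complex_of_real c \<noteq> 0" using c0 by simp
  show ?thesis unfolding th using cz nz by (simp add: field_simps del: of_real_sum)
qed

lemma edge_factor:
  assumes s: "\<sigma> \<in> configs n N" and e: "e \<in> S" and ng: "e \<notin> gamma' n \<sigma> \<gamma>"
  shows "(\<Sum>g\<in>{0..<int n}. \<rho> (dsig n \<sigma> (pe e) + g) * Fe \<beta> \<kappa> \<sigma> e g)
       = theta n \<rho> \<beta> \<kappa> (\<sigma> e - dsig n \<sigma> (pe e)) * (\<Sum>g\<in>{0..<int n}. Fe \<beta> \<kappa> \<sigma> e g)"
proof -
  define b where "b = dsig n \<sigma> (pe e)"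
  define h where "h = \<sigma> e - b"
  have peC: "pe e \<in> cobd e" using pe e by blast
  have allb: "\<forall>p\<in>cobd e. dsig n \<sigma> p = b" using ng e peC unfolding gamma'_def b_def by blast
  have F: "Fe \<beta> \<kappa> \<sigma> e g = of_real (Eh \<beta> \<kappa> h (b + g))" for g
  proof -
    have "(\<Sum>p\<in>cobd e. \<rho> (dsig n \<sigma> p + g) + \<rho> (- (dsig n \<sigma> p + g)))
        = (\<Sum>p\<in>cobd e. of_real (2 * Re (\<rho> (b + g))))"
      using allb rho_plus_neg[OF rep, of "b + g"] by (intro sum.cong) auto
    also have "\<dots> = of_real (12 * Re (\<rho> (b + g)))" by (simp add: card_cobd)
    finally have a: "(\<Sum>p\<in>cobd e. \<rho> (dsig n \<sigma> p + g) + \<rho> (- (dsig n \<sigma> p + g))) = of_real (12 * Re (\<rho> (b + g)))" .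
    have "\<sigma> e + g = b + g + h" by (simp add: h_def)
    then have bb: "\<rho> (\<sigma> e + g) + \<rho> (- (\<sigma> e + g)) = of_real (2 * Re (\<rho> (b + g + h)))"
      using rho_plus_neg[OF rep, of "\<sigma> e + g"] by (simp only:)
    show ?thesis unfolding Fe_def a bb Eh_def
      by (simp add: exp_of_real[symmetric])
  qed
  have "(\<Sum>g\<in>{0..<int n}. \<rho> (b + g) * Fe \<beta> \<kappa> \<sigma> e g) = (\<Sum>g\<in>{0..<int n}. \<rho> (b + g) * of_real (Eh \<beta> \<kappa> h (b + g)))"
    unfolding F ..
  also have "\<dots> = (\<Sum>g\<in>{0..<int n}. \<rho> g * of_real (Eh \<beta> \<kappa> h g))"
    by (rule sum_shift_mod[where H = "\<lambda>x. \<rho> x * of_real (Eh \<beta> \<kappa> h x)"])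
       (metis Eh_per rho_cong[OF rep])
  also have "\<dots> = theta n \<rho> \<beta> \<kappa> h * of_real (\<Sum>g\<in>{0..<int n}. Eh \<beta> \<kappa> h g)" by (rule theta_Eh[symmetric])
  also have "(\<Sum>g\<in>{0..<int n}. Eh \<beta> \<kappa> h g) = (\<Sum>g\<in>{0..<int n}. Eh \<beta> \<kappa> h (b + g))"
    by (rule sum_shift_mod[symmetric]) (rule Eh_per)
  also have "of_real \<dots> = (\<Sum>g\<in>{0..<int n}. Fe \<beta> \<kappa> \<sigma> e g)" unfolding F by simp
  finally show ?thesis unfolding b_def h_def .
qed

end



context setting begin

abbreviation "TT \<equiv> PiE S (\<lambda>_. {0..<int n})"

lemma sum_PiE_prod: fixes H :: "edge \<Rightarrow> int \<Rightarrow> complex" shows "(\<Sum>t\<in>TT. c * (\<Prod>e\<in>S. H e (t e))) = c * (\<Prod>e\<in>S. \<Sum>g\<in>{0..<int n}. H e g)"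
  using prod_sum_PiE[OF fin_S, of "\<lambda>_. {0..<int n}" H] by (simp add: sum_distrib_left)

lemma pointwise:
  assumes s: "\<sigma> \<in> configs n N"
  shows "(\<Sum>t\<in>TT. \<rho> (\<Sum>e\<in>S - gamma' n (shift \<sigma> t) \<gamma>. dsig n (shift \<sigma> t) (pe e)) * weight n \<rho> N \<beta> \<kappa> (shift \<sigma> t))
       = (\<Sum>t\<in>TT. (\<Prod>e\<in>S - gamma' n (shift \<sigma> t) \<gamma>. theta n \<rho> \<beta> \<kappa> (shift \<sigma> t e - dsig n (shift \<sigma> t) (pe e))) * weight n \<rho> N \<beta> \<kappa> (shift \<sigma> t))"
proof -
  define A where "A = S - gamma' n \<sigma> \<gamma>"
  have AS: "S \<inter> A = A" by (auto simp: A_def)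
  have finA: "finite A" using fin_S by (simp add: A_def)
  define G1 where "G1 = (\<lambda>e g. if e \<in> A then \<rho> (dsig n \<sigma> (pe e) + g) else 1)"
  define G2 where "G2 = (\<lambda>e (g::int). if e \<in> A then theta n \<rho> \<beta> \<kappa> (\<sigma> e - dsig n \<sigma> (pe e)) else 1)"
  have f1: "\<rho> (\<Sum>e\<in>S - gamma' n (shift \<sigma> t) \<gamma>. dsig n (shift \<sigma> t) (pe e)) = (\<Prod>e\<in>S. G1 e (t e))" for t
  proof -
    have "\<rho> (\<Sum>e\<in>S - gamma' n (shift \<sigma> t) \<gamma>. dsig n (shift \<sigma> t) (pe e))
        = (\<Prod>e\<in>A. \<rho> (dsig n (shift \<sigma> t) (pe e)))"
      unfolding gamma'_shift A_def by (rule rho_sum[OF rep])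
    also have "\<dots> = (\<Prod>e\<in>A. \<rho> (dsig n \<sigma> (pe e) + t e))"
    proof (rule prod.cong[OF refl])
      fix e assume "e \<in> A" then have e: "e \<in> S" by (simp add: A_def)
      have "pe e \<in> cobd e" using pe e by blast
      then show "\<rho> (dsig n (shift \<sigma> t) (pe e)) = \<rho> (dsig n \<sigma> (pe e) + t e)"
        using dsig_shift_cobd[OF e] rho_mod[OF rep] by simp
    qed
    also have "\<dots> = (\<Prod>e\<in>S. G1 e (t e))"
      unfolding G1_def using prod.inter_restrict[OF fin_S, of "\<lambda>e. \<rho> (dsig n \<sigma> (pe e) + t e)" A] AS by simp
    finally show ?thesis .
  qed
  have f2: "(\<Prod>e\<in>S - gamma' n (shift \<sigma> t) \<gamma>. theta n \<rho> \<beta> \<kappa> (shift \<sigma> t e - dsig n (shift \<sigma> t) (pe e)))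
      = (\<Prod>e\<in>S. G2 e (t e))" for t
  proof -
    have "(\<Prod>e\<in>S - gamma' n (shift \<sigma> t) \<gamma>. theta n \<rho> \<beta> \<kappa> (shift \<sigma> t e - dsig n (shift \<sigma> t) (pe e)))
        = (\<Prod>e\<in>A. theta n \<rho> \<beta> \<kappa> (\<sigma> e - dsig n \<sigma> (pe e)))"
      unfolding gamma'_shift A_def
    proof (rule prod.cong[OF refl])
      fix e assume "e \<in> S - gamma' n \<sigma> \<gamma>" then have e: "e \<in> S" by simp
      have "pe e \<in> cobd e" using pe e by blast
      then have d: "dsig n (shift \<sigma> t) (pe e) = (dsig n \<sigma> (pe e) + t e) mod int n"
        by (rule dsig_shift_cobd[OF e])
      have se: "shift \<sigma> t e = (\<sigma> e + t e) mod int n" using e by (simp add: shift_def)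
      have "(shift \<sigma> t e - dsig n (shift \<sigma> t) (pe e)) mod int n = (\<sigma> e - dsig n \<sigma> (pe e)) mod int n"
        unfolding d se using mod_diff_eq[of "\<sigma> e + t e" "int n" "dsig n \<sigma> (pe e) + t e"] by simp
      then show "theta n \<rho> \<beta> \<kappa> (shift \<sigma> t e - dsig n (shift \<sigma> t) (pe e)) = theta n \<rho> \<beta> \<kappa> (\<sigma> e - dsig n \<sigma> (pe e))"
        by (rule theta_per)
    qed
    also have "\<dots> = (\<Prod>e\<in>S. G2 e (t e))"
      unfolding G2_def using prod.inter_restrict[OF fin_S, of "\<lambda>e. theta n \<rho> \<beta> \<kappa> (\<sigma> e - dsig n \<sigma> (pe e))" A] AS by simp
    finally show ?thesis .
  qed
  have L: "(\<Sum>t\<in>TT. \<rho> (\<Sum>e\<in>S - gamma' n (shift \<sigma> t) \<gamma>. dsig n (shift \<sigma> t) (pe e)) * weight n \<rho> N \<beta> \<kappa> (shift \<sigma> t))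
      = Cw \<beta> \<kappa> \<sigma> * (\<Prod>e\<in>S. \<Sum>g\<in>{0..<int n}. G1 e g * Fe \<beta> \<kappa> \<sigma> e g)"
    unfolding f1 weight_shift[OF s] sum_PiE_prod[symmetric]
    by (simp add: prod.distrib mult.commute mult.left_commute)
  have R: "(\<Sum>t\<in>TT. (\<Prod>e\<in>S - gamma' n (shift \<sigma> t) \<gamma>. theta n \<rho> \<beta> \<kappa> (shift \<sigma> t e - dsig n (shift \<sigma> t) (pe e))) * weight n \<rho> N \<beta> \<kappa> (shift \<sigma> t))
      = Cw \<beta> \<kappa> \<sigma> * (\<Prod>e\<in>S. \<Sum>g\<in>{0..<int n}. G2 e g * Fe \<beta> \<kappa> \<sigma> e g)"
    unfolding f2 weight_shift[OF s] sum_PiE_prod[symmetric]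
    by (simp add: prod.distrib mult.commute mult.left_commute)
  have M: "(\<Prod>e\<in>S. \<Sum>g\<in>{0..<int n}. G1 e g * Fe \<beta> \<kappa> \<sigma> e g) = (\<Prod>e\<in>S. \<Sum>g\<in>{0..<int n}. G2 e g * Fe \<beta> \<kappa> \<sigma> e g)"
  proof (rule prod.cong[OF refl])
    fix e assume e: "e \<in> S"
    show "(\<Sum>g\<in>{0..<int n}. G1 e g * Fe \<beta> \<kappa> \<sigma> e g) = (\<Sum>g\<in>{0..<int n}. G2 e g * Fe \<beta> \<kappa> \<sigma> e g)"
    proof (cases "e \<in> A")
      case True
      then have ng: "e \<notin> gamma' n \<sigma> \<gamma>" by (simp add: A_def)
      show ?thesis using True edge_factor[OF s e ng, of \<beta> \<kappa>]
        by (simp add: G1_def G2_def sum_distrib_left)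
    next
      case False then show ?thesis by (simp add: G1_def G2_def)
    qed
  qed
  show ?thesis unfolding L R M ..
qed

lemma main:
  "expect n \<rho> N \<beta> \<kappa> (\<lambda>\<sigma>. \<rho> (\<Sum>e\<in>S - gamma' n \<sigma> \<gamma>. dsig n \<sigma> (pe e)))
 = expect n \<rho> N \<beta> \<kappa> (\<lambda>\<sigma>. \<Prod>e\<in>S - gamma' n \<sigma> \<gamma>. theta n \<rho> \<beta> \<kappa> (\<sigma> e - dsig n \<sigma> (pe e)))"
proof -
  let ?w = "weight n \<rho> N \<beta> \<kappa>"
  let ?f1 = "\<lambda>\<sigma>. \<rho> (\<Sum>e\<in>S - gamma' n \<sigma> \<gamma>. dsig n \<sigma> (pe e))"
  let ?f2 = "\<lambda>\<sigma>. \<Prod>e\<in>S - gamma' n \<sigma> \<gamma>. theta n \<rho> \<beta> \<kappa> (\<sigma> e - dsig n \<sigma> (pe e))"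
  have avg: "of_nat (card TT) * (\<Sum>\<sigma>\<in>configs n N. f \<sigma> * ?w \<sigma>)
      = (\<Sum>\<sigma>\<in>configs n N. \<Sum>t\<in>TT. f (shift \<sigma> t) * ?w (shift \<sigma> t))" for f
  proof -
    have "of_nat (card TT) * (\<Sum>\<sigma>\<in>configs n N. f \<sigma> * ?w \<sigma>) = (\<Sum>t\<in>TT. \<Sum>\<sigma>\<in>configs n N. f \<sigma> * ?w \<sigma>)"
      by simp
    also have "\<dots> = (\<Sum>t\<in>TT. \<Sum>\<sigma>\<in>configs n N. f (shift \<sigma> t) * ?w (shift \<sigma> t))"
      by (rule sum.cong[OF refl]) (rule sum_shift)
    also have "\<dots> = (\<Sum>\<sigma>\<in>configs n N. \<Sum>t\<in>TT. f (shift \<sigma> t) * ?w (shift \<sigma> t))"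
      by (rule sum.swap)
    finally show ?thesis .
  qed
  have cnz: "card TT \<noteq> 0"
    using fin_S npos by (simp add: card_PiE)
  have "of_nat (card TT) * (\<Sum>\<sigma>\<in>configs n N. ?f1 \<sigma> * ?w \<sigma>) = of_nat (card TT) * (\<Sum>\<sigma>\<in>configs n N. ?f2 \<sigma> * ?w \<sigma>)"
    unfolding avg by (rule sum.cong[OF refl]) (rule pointwise)
  then have "(\<Sum>\<sigma>\<in>configs n N. ?f1 \<sigma> * ?w \<sigma>) = (\<Sum>\<sigma>\<in>configs n N. ?f2 \<sigma> * ?w \<sigma>)"
    using cnz by simp
  then show ?thesis unfolding expect_def by simp
qed

end

theorem mainTheorem18:
  fixes n N :: nat and \<rho> :: "int \<Rightarrow> complex" and \<beta> \<kappa> :: real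
    and \<gamma> :: "edge set" and pe :: "edge \<Rightarrow> plaq"
  assumes "0 < n" and "faithful_rep n \<rho>"
    and "\<beta> \<ge> 0" and "\<kappa> \<ge> 0"
    and "simple_loop \<gamma>" and "\<gamma> \<subseteq> edges N"
    and "bd_cobd \<gamma> \<subseteq> edges N"
    and "\<forall>e\<in>gamma1 \<gamma>. pe e \<in> cobd e"
  shows "expect n \<rho> N \<beta> \<kappa>
           (\<lambda>\<sigma>. \<rho> (\<Sum>e\<in>gamma1 \<gamma> - gamma' n \<sigma> \<gamma>. dsig n \<sigma> (pe e)))
       = expect n \<rho> N \<beta> \<kappa>
           (\<lambda>\<sigma>. \<Prod>e\<in>gamma1 \<gamma> - gamma' n \<sigma> \<gamma>. theta n \<rho> \<beta> \<kappa> (\<sigma> e - dsig n \<sigma> (pe e)))"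
  proof -
  interpret setting n N \<rho> \<gamma> pe using assms by unfold_locales auto
  show ?thesis by (rule main)
qed

end
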